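(* For every real $\eta > -1$, $$\frac{\pi}{4} = \frac{ {}_{3}F_{2}\left[ \begin{matrix} -\eta, \frac{1}{2}, 1 \\ \frac{3}{2}, 2 + \eta \end{matrix} \ \Bigg| \ -1 \right] }{ {}_{3}F_{2}\left[ \begin{matrix} \frac{1}{2}, \frac{1}{2}, 1 + \eta \\ 1, 2 + \eta \end{matrix} \ \Bigg| \ 1 \right]}.$$
   Context: ${}_pF_q\left[\begin{matrix} a_1,\dots,a_p\\ b_1,\dots,b_q\end{matrix}\,\Big|\, z\right] = \sum_{n\ge 0} \frac{(a_1)_n\cdots(a_p)_n}{(b_1)_n\cdots(b_q)_n}\frac{z^n}{n!}$ is the generalized hypergeometric series, where $(x)_n = \Gamma(x+n)/\Gamma(x)$ is the Pochhammer symbol. *)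

theory Defs
  imports "HOL-Analysis.Analysis"
begin

definition hypergeom :: "real list \<Rightarrow> real list \<Rightarrow> real \<Rightarrow> real" where
  "hypergeom as bs z =
     (\<Sum>n. (\<Prod>a\<leftarrow>as. pochhammer a n) / (\<Prod>b\<leftarrow>bs. pochhammer b n) * z ^ n / fact n)"

end

theory Submission
  imports Defs
begin



lemma poch_ratio1:
  fixes e :: real assumes "e > -1"
  shows "pochhammer (1+e) n / pochhammer (2+e) n = (1+e)/(1+e+n)"
proof (induction n)
  case 0 then show ?case using assms by simp
next
  case (Suc n)
  have p: "pochhammer (2+e) n > 0" using assms by (intro pochhammer_pos) auto
  have "pochhammer (1+e) (Suc n) / pochhammer (2+e) (Suc n)
      = (pochhammer (1+e) n / pochhammer (2+e) n) * ((1+e+n)/(2+e+n))"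
    by (simp add: pochhammer_Suc)
  also have "\<dots> = (1+e)/(1+e+Suc n)" using assms Suc by (simp add: field_simps)
  finally show ?case .
qed

lemma poch_ratio2:
  "pochhammer (1/2::real) n / pochhammer (3/2) n = 1/(2*real n+1)"
proof (induction n)
  case 0 then show ?case by simp
next
  case (Suc n)
  have p: "pochhammer (3/2::real) n > 0" "pochhammer (1/2::real) n > 0" by (intro pochhammer_pos; simp)+
  have "pochhammer (1/2::real) (Suc n) / pochhammer (3/2) (Suc n)
      = (pochhammer (1/2) n / pochhammer (3/2) n) * ((1/2+n)/(3/2+n))"
    by (simp add: pochhammer_Suc)
  also have "\<dots> = 1/(2*real n+1) * ((1/2+n)/(3/2+n))" by (simp only: Suc)
  also have "\<dots> = 1/(2*real (Suc n)+1)" by (simp add: field_simps) (smt (verit) of_nat_0_le_iff mult_nonneg_nonneg)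
  finally show ?case .
qed

definition cc :: "nat \<Rightarrow> real" where "cc m = pochhammer (1/2) m / fact m"

lemma B_series:
  fixes e :: real assumes "e > -1"
  shows "hypergeom [1/2, 1/2, 1 + e] [1, 2 + e] 1 = (\<Sum>m. cc m ^ 2 * ((1+e)/(1+e+m)))"
  unfolding hypergeom_def
proof (intro arg_cong[where f=suminf] ext)
  fix n
  have r: "pochhammer (1+e) n / pochhammer (2+e) n = (1+e)/(1+e+n)" by (rule poch_ratio1[OF assms])
  have p: "pochhammer (2+e) n > 0" using assms by (intro pochhammer_pos) auto
  have "(\<Prod>a\<leftarrow>[1/2, 1/2, 1 + e]. pochhammer a n) / (\<Prod>b\<leftarrow>[1, 2 + e]. pochhammer b n) * 1 ^ n / fact n
     = (pochhammer (1/2) n / fact n)^2 * (pochhammer (1+e) n / pochhammer (2+e) n)"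
    by (simp add: pochhammer_fact[symmetric] power2_eq_square mult_ac)
  then show "(\<Prod>a\<leftarrow>[1/2, 1/2, 1 + e]. pochhammer a n) / (\<Prod>b\<leftarrow>[1, 2 + e]. pochhammer b n) * 1 ^ n / fact n
     = cc n ^ 2 * ((1+e)/(1+e+n))" by (simp add: r cc_def)
qed

lemma fact_over_poch:
  fixes e :: real assumes "e > -1"
  shows "fact n / pochhammer (2+e) n = (e+1) * Beta (e+1) (n+1)"
proof -
  have ni: "2+e \<notin> \<int>\<^sub>\<le>\<^sub>0" "1+e \<notin> \<int>\<^sub>\<le>\<^sub>0" using assms
    by (auto elim!: nonpos_Ints_cases)
  have g2: "Gamma (e+2) = (1+e) * Gamma (1+e)"
    using Gamma_plus1[OF ni(2)] by (simp add: add_ac)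
  have gn: "Gamma (1 + real n) = fact n" using Gamma_fact[of n] by (simp add: add_ac)
  have gp: "Gamma (1+e) > 0" "Gamma (e + real n + 2) > 0" using assms by auto
  have "pochhammer (2+e) n = Gamma (2+e+n) / Gamma (2+e)" by (rule pochhammer_Gamma[OF ni(1)])
  then show ?thesis unfolding Beta_def using gp assms
    by (simp add: g2 gn field_simps)
qed

lemma A_series:
  fixes e :: real assumes "e > -1"
  shows "hypergeom [-e, 1/2, 1] [3/2, 2 + e] (-1) =
     (\<Sum>n. (e gchoose n) * ((e+1) * Beta (e+1) (n+1)) / (2*real n+1))"
  unfolding hypergeom_def
proof (intro arg_cong[where f=suminf] ext)
  fix n
  have r: "pochhammer (1/2::real) n / pochhammer (3/2) n = 1/(2*real n+1)" by (rule poch_ratio2)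
  have p: "pochhammer (2+e) n > 0" "pochhammer (3/2::real) n > 0" using assms by (intro pochhammer_pos; auto)+
  have f: "fact n / pochhammer (2+e) n = (e+1) * Beta (e+1) (n+1)" by (rule fact_over_poch[OF assms])
  have "(\<Prod>a\<leftarrow>[-e, 1/2, 1]. pochhammer a n) / (\<Prod>b\<leftarrow>[3/2, 2 + e]. pochhammer b n) * (-1) ^ n / fact n
     = ((-1)^n * pochhammer (-e) n / fact n) * (fact n / pochhammer (2+e) n) *
        (pochhammer (1/2) n / pochhammer (3/2) n)"
    using p by (simp add: pochhammer_fact[symmetric] field_simps)
  then show "(\<Prod>a\<leftarrow>[-e, 1/2, 1]. pochhammer a n) / (\<Prod>b\<leftarrow>[3/2, 2 + e]. pochhammer b n) * (-1) ^ n / fact n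
     = (e gchoose n) * ((e+1) * Beta (e+1) (n+1)) / (2*real n+1)"
    by (simp add: r f gbinomial_pochhammer)
qed



lemma rGS_pos:
  fixes z :: real assumes "z > 0"
  shows "rGamma_series z n > 0"
  unfolding rGamma_series_def using assms by (auto intro!: divide_pos_pos pochhammer_pos)

lemma poch_eq_rGS:
  fixes z :: real assumes "n > 0"
  shows "pochhammer z (Suc n) = rGamma_series z n * fact n * exp (z * ln (real n))"
  unfolding rGamma_series_def using assms by simp

lemma T_abs_summable:
  fixes e :: real assumes e: "e > -1"
  shows "summable (\<lambda>n. \<bar>pochhammer (-e) n / pochhammer (2+e) n / (2*real n+1)\<bar>)"
proof -
  define L where "L = \<bar>rGamma (-e)\<bar> / rGamma (2+e)"
  have rg: "rGamma (2+e) > 0" using e by (simp add: rGamma_inverse_Gamma)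
  have conv: "(\<lambda>n. \<bar>rGamma_series (-e) n\<bar> / rGamma_series (2+e) n) \<longlonglongrightarrow> L"
    unfolding L_def using rg by (intro tendsto_intros) auto
  have ev: "eventually (\<lambda>n. \<bar>rGamma_series (-e) n\<bar> / rGamma_series (2+e) n < L + 1) sequentially"
    using order_tendstoD(2)[OF conv, of "L+1"] by simp
  have "eventually (\<lambda>n. norm (\<bar>pochhammer (-e) (Suc n) / pochhammer (2+e) (Suc n) / (2*real (Suc n)+1)\<bar>)
      \<le> (L+1) * real n powr (-2*e-3)) sequentially"
    using ev eventually_gt_at_top[of "0::nat"]
  proof eventually_elim
    case (elim n)
    have r2: "rGamma_series (2+e) n > 0" using e by (intro rGS_pos) auto
    have ln: "exp (- e * ln (real n)) / exp ((2+e) * ln (real n)) = real n powr (-2*e-2)"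
      using elim(2) by (simp add: powr_def exp_diff[symmetric] algebra_simps)
    have "\<bar>pochhammer (-e) (Suc n) / pochhammer (2+e) (Suc n)\<bar>
        = \<bar>rGamma_series (-e) n\<bar> / rGamma_series (2+e) n *
          (exp (- e * ln (real n)) / exp ((2+e) * ln (real n)))"
      using elim(2) r2 by (simp add: poch_eq_rGS abs_mult)
    also have "\<dots> \<le> (L+1) * real n powr (-2*e-2)"
      unfolding ln using elim(1) by (intro mult_right_mono) auto
    finally have a: "\<bar>pochhammer (-e) (Suc n) / pochhammer (2+e) (Suc n)\<bar> \<le> (L+1) * real n powr (-2*e-2)" .
    have L1: "L + 1 > 0" unfolding L_def using rg by (auto intro: add_nonneg_pos)
    have "norm (\<bar>pochhammer (-e) (Suc n) / pochhammer (2+e) (Suc n) / (2*real (Suc n)+1)\<bar>)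
        = \<bar>pochhammer (-e) (Suc n) / pochhammer (2+e) (Suc n)\<bar> / (2*real (Suc n)+1)" by (simp add: abs_mult)
    also have "\<dots> \<le> (L+1) * real n powr (-2*e-2) / real n"
      using a elim(2) L1 by (intro frac_le) auto
    also have "\<dots> = (L+1) * real n powr (-2*e-3)"
      using elim(2) by (simp add: powr_diff powr_add field_simps powr_minus power2_eq_square power3_eq_cube)
    finally show ?case .
  qed
  moreover have "summable (\<lambda>n. (L+1) * real n powr (-2*e-3))"
    using e by (intro summable_mult) (simp add: summable_real_powr_iff)
  ultimately have "summable (\<lambda>n. \<bar>pochhammer (-e) (Suc n) / pochhammer (2+e) (Suc n) / (2*real (Suc n)+1)\<bar>)"
    by (rule summable_comparison_test_ev)
  then show ?thesis by (subst summable_Suc_iff[symmetric])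
qed



lemma beta_lebesgue:
  fixes a b :: real assumes "a > 0" "b > 0"
  shows "integrable lborel (\<lambda>t. indicator {0..1} t * (t powr (a-1) * (1-t) powr (b-1)))"
    and "(\<integral>t. indicator {0..1} t * (t powr (a-1) * (1-t) powr (b-1)) \<partial>lborel) = Beta a b"
proof -
  have nn: "(\<integral>\<^sup>+t. ennreal (indicator {0..1} t * (t powr (a-1) * (1-t) powr (b-1))) \<partial>lborel) = ennreal (Beta a b)"
    by (rule nn_integral_has_integral_lebesgue[OF _ has_integral_Beta_real[OF assms]]) auto
  have B: "Beta a b \<ge> 0" using assms by (simp add: Beta_def)
  have "integrable lborel (\<lambda>t. indicator {0..1} t * (t powr (a-1) * (1-t) powr (b-1))) \<and>
     (\<integral>t. indicator {0..1} t * (t powr (a-1) * (1-t) powr (b-1)) \<partial>lborel) = Beta a b"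
    by (rule nn_integral_eq_integrable[THEN iffD1, OF _ _ B nn]) auto
  then show "integrable lborel (\<lambda>t. indicator {0..1} t * (t powr (a-1) * (1-t) powr (b-1)))"
    and "(\<integral>t. indicator {0..1} t * (t powr (a-1) * (1-t) powr (b-1)) \<partial>lborel) = Beta a b" by auto
qed

lemma gchoose_abs_summable:
  fixes y e :: real assumes "0 \<le> y" "y < 1"
  shows "summable (\<lambda>n. \<bar>e gchoose n\<bar> * y^n)"
proof -
  have "summable (\<lambda>n. (e gchoose n) * ((1+y)/2)^n)"
    using gen_binomial_real[of "(1+y)/2" e] assms by (auto simp: sums_iff)
  from powser_insidea[OF this, of y] assms
  show ?thesis by (simp add: abs_mult power_abs)
qed

lemma fact_le_poch:
  fixes e :: real assumes "e > -1"
  shows "fact n \<le> pochhammer (2+e) n"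
proof (induction n)
  case (Suc n)
  have "fact n * (1 + real n) \<le> pochhammer (2+e) n * (2+e+real n)"
    using Suc assms pochhammer_pos[of "2+e" n] by (intro mult_mono) auto
  then show ?case by (simp add: pochhammer_Suc mult.commute)
qed simp

lemma betan_bounds:
  fixes e :: real and n :: nat assumes "e > -1"
  shows "0 < (e+1) * Beta (e+1) (n+1)" "(e+1) * Beta (e+1) (n+1) \<le> 1"
proof -
  have p: "pochhammer (2+e) n > 0" using assms by (intro pochhammer_pos) auto
  show "0 < (e+1) * Beta (e+1) (n+1)" unfolding fact_over_poch[OF assms, symmetric] using p by simp
  show "(e+1) * Beta (e+1) (n+1) \<le> 1" unfolding fact_over_poch[OF assms, symmetric] using p fact_le_poch[OF assms, of n]
    by simp
qed

lemma inner_series: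
  fixes e x :: real assumes e: "e > -1" and x: "0 \<le> x" "x < 1"
  shows "integrable lborel (\<lambda>w. indicator {0..1} w * (w powr e * (1+(1-w)*x^2) powr e))"
    and "(\<Sum>n. (e gchoose n) * ((e+1) * Beta (e+1) (n+1)) * x^(2*n)) =
       (e+1) * (\<integral>w. indicator {0..1} w * (w powr e * (1+(1-w)*x^2) powr e) \<partial>lborel)"
proof -
  define f where "f n w = ((e gchoose n) * (e+1) * x^(2*n)) *
       (indicator {0..1} w * (w powr ((e+1)-1) * (1-w) powr (real (n+1)-1)))" for n w
  have x2: "0 \<le> x^2" "x^2 < 1" using x by (auto simp: power_less_one_iff abs_square_less_1)
  have int: "integrable lborel (f n)" for n
    unfolding f_def using beta_lebesgue(1)[of "e+1" "real (n+1)"] e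
    by (intro integrable_mult_right) simp
  have intf: "integral\<^sup>L lborel (f n) = (e gchoose n) * ((e+1) * Beta (e+1) (n+1)) * x^(2*n)" for n
    unfolding f_def integral_mult_right_zero using beta_lebesgue(2)[of "e+1" "real (n+1)"] e
    by (simp add: mult_ac)
  have sumg: "summable (\<lambda>n. \<bar>e gchoose n\<bar> * (x^2)^n)"
    by (rule gchoose_abs_summable) (use x2 in auto)
  have bnd: "\<bar>f n w\<bar> \<le> (e+1) * w powr e * (\<bar>e gchoose n\<bar> * (x^2)^n)" if "0 \<le> w" for n w
  proof -
    have pw: "(1-w) powr real n \<le> 1" if "w \<le> 1" using that \<open>0\<le>w\<close> by (intro powr_le1) auto
    have hx: "x^(2*n) = (x^2)^n" by (simp add: power_mult)
    then show ?thesis unfolding f_def using e that pw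
      by (auto simp: indicator_def abs_mult mult_ac x2 intro!: mult_left_mono mult_right_mono mult_left_le_one_le)
  qed
  have AEs: "AE w in lborel. summable (\<lambda>n. norm (f n w))"
  proof (rule AE_I2)
    fix w
    show "summable (\<lambda>n. norm (f n w))"
    proof (cases "0 \<le> w")
      case True
      show ?thesis
        by (rule summable_comparison_test[OF _ summable_mult[OF sumg, of "(e+1) * w powr e"]])
           (use bnd True in auto)
    next
      case False then show ?thesis unfolding f_def by simp
    qed
  qed
  have sn: "summable (\<lambda>n. \<integral>w. norm (f n w) \<partial>lborel)"
  proof -
    have "(\<integral>w. norm (f n w) \<partial>lborel) = \<bar>e gchoose n\<bar> * ((e+1) * Beta (e+1) (n+1)) * (x^2)^n" for n
    proof -
      have "(\<lambda>w. norm (f n w)) = (\<lambda>w. \<bar>(e gchoose n) * (e+1) * x^(2*n)\<bar> *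
          (indicator {0..1} w * (w powr ((e+1)-1) * (1-w) powr (real (n+1)-1))))"
        unfolding f_def by (auto simp: indicator_def abs_mult)
      then show ?thesis using beta_lebesgue(2)[of "e+1" "real (n+1)"] e
        by (simp add: abs_mult power_mult power_abs)
    qed
    moreover have "summable (\<lambda>n. \<bar>e gchoose n\<bar> * ((e+1) * Beta (e+1) (n+1)) * (x^2)^n)"
    proof (rule summable_comparison_test[OF _ sumg], intro exI allI impI)
      fix n :: nat
      have b: "0 < (e+1) * Beta (e+1) (n+1)" "(e+1) * Beta (e+1) (n+1) \<le> 1" using betan_bounds[OF e] by auto
      have "norm (\<bar>e gchoose n\<bar> * ((e+1) * Beta (e+1) (n+1)) * (x^2)^n) =
          ((e+1) * Beta (e+1) (n+1)) * (\<bar>e gchoose n\<bar> * (x^2)^n)"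
      proof -
        have "0 \<le> \<bar>e gchoose n\<bar> * ((e+1) * Beta (e+1) (n+1)) * (x^2)^n" using b(1) x2
          by (metis abs_ge_zero less_imp_le mult_nonneg_nonneg zero_le_power)
        then show ?thesis by (simp only: real_norm_def abs_of_nonneg) (simp add: mult_ac)
      qed
      also have "\<dots> \<le> 1 * (\<bar>e gchoose n\<bar> * (x^2)^n)" using b(2) by (intro mult_right_mono) auto
      finally show "norm (\<bar>e gchoose n\<bar> * ((e+1) * Beta (e+1) (n+1)) * (x^2)^n) \<le> \<bar>e gchoose n\<bar> * (x^2)^n" by simp
    qed
    ultimately show ?thesis by simp
  qed
  have eqs: "(\<Sum>n. f n w) = indicator {0..1} w * ((e+1) * (w powr e * (1+(1-w)*x^2) powr e))"
    if "0 < w" "w < 1" for w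
  proof -
    have "(\<lambda>n. (e gchoose n) * ((1-w)*x^2)^n) sums (1 + (1-w)*x^2) powr e"
    proof (rule gen_binomial_real)
      have "(1-w)*x^2 \<le> 1*x^2" by (intro mult_right_mono) (use that x2 in auto)
      then show "\<bar>(1-w)*x^2\<bar> < 1" using that x2 by (auto simp: abs_mult)
    qed
    then have "(\<lambda>n. (e+1) * w powr e * ((e gchoose n) * ((1-w)*x^2)^n)) sums ((e+1) * w powr e * (1 + (1-w)*x^2) powr e)"
      by (rule sums_mult)
    moreover have "f n w = (e+1) * w powr e * ((e gchoose n) * ((1-w)*x^2)^n)" for n
    proof -
      have hx: "x^(2*n) = (x^2)^n" by (simp add: power_mult)
      show ?thesis unfolding f_def hx using that by (simp add: powr_realpow power_mult_distrib mult_ac)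
    qed
    ultimately show ?thesis using that by (simp add: sums_iff mult_ac)
  qed
  have AEeq: "AE w in lborel. (\<Sum>n. f n w) = (e+1) * (indicator {0..1} w * (w powr e * (1+(1-w)*x^2) powr e))"
    using AE_lborel_singleton[of 0] AE_lborel_singleton[of 1]
  proof eventually_elim
    case (elim w)
    show ?case
    proof (cases "0 < w \<and> w < 1")
      case True then show ?thesis using eqs[of w] by (simp add: mult_ac)
    next
      case False
      then have "w \<notin> {0..1}" using elim by auto
      then show ?thesis unfolding f_def by simp
    qed
  qed
  have I1: "integrable lborel (\<lambda>w. \<Sum>n. f n w)"
    by (rule integrable_suminf[OF int AEs sn])
  have I2: "integrable lborel (\<lambda>w. (e+1) * (indicator {0..1} w * (w powr e * (1+(1-w)*x^2) powr e)))"
    by (rule integrable_cong_AE_imp[OF I1 _ AEeq]) measurable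
  then show I3: "integrable lborel (\<lambda>w. indicator {0..1} w * (w powr e * (1+(1-w)*x^2) powr e))"
    using e by (simp add: integrable_mult_right_iff)
  have "(\<Sum>n. (e gchoose n) * ((e+1) * Beta (e+1) (n+1)) * x^(2*n)) = (\<Sum>n. integral\<^sup>L lborel (f n))"
    by (simp add: intf)
  also have "\<dots> = (\<integral>w. (\<Sum>n. f n w) \<partial>lborel)"
    by (rule integral_suminf[OF int AEs sn, symmetric])
  also have "\<dots> = (\<integral>w. (e+1) * (indicator {0..1} w * (w powr e * (1+(1-w)*x^2) powr e)) \<partial>lborel)"
    by (rule integral_cong_AE[OF _ _ AEeq]) (use I1 I2 in auto)
  also have "\<dots> = (e+1) * (\<integral>w. indicator {0..1} w * (w powr e * (1+(1-w)*x^2) powr e) \<partial>lborel)"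
    by simp
  finally show "(\<Sum>n. (e gchoose n) * ((e+1) * Beta (e+1) (n+1)) * x^(2*n)) =
       (e+1) * (\<integral>w. indicator {0..1} w * (w powr e * (1+(1-w)*x^2) powr e) \<partial>lborel)" .
qed



lemma int_pow01:
  "integrable lborel (\<lambda>x. indicator {0..1} x * x^k :: real)"
  "(\<integral>x. indicator {0..1} x * x^k \<partial>lborel) = 1 / (real k + 1)"
proof -
  show "integrable lborel (\<lambda>x. indicator {0..1} x * x^k :: real)"
    using borel_integrable_atLeastAtMost'[of 0 1 "\<lambda>x. x^k"]
    by (simp add: set_integrable_def continuous_intros)
  have "(\<integral>x. indicator {0..1} x *\<^sub>R x^k \<partial>lborel) = 1^(Suc k)/(real k+1) - 0^(Suc k)/(real k+1)"
  proof (rule integral_FTC_atLeastAtMost)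
    fix x :: real
    have "((\<lambda>x. x^(Suc k)) has_real_derivative (real (Suc k) * x^k)) (at x)"
      using DERIV_pow[of "Suc k" x] by simp
    then have "((\<lambda>x. x^(Suc k)/(real k+1)) has_real_derivative (real (Suc k) * x^k/(real k+1))) (at x)"
      by (rule DERIV_cdivide)
    moreover have "real (Suc k) * x^k/(real k+1) = x^k"
      by (simp add: add.commute)
    ultimately have "((\<lambda>x. x^(Suc k)/(real k+1)) has_real_derivative x^k) (at x)"
      by simp
    then show "((\<lambda>x. x^(Suc k)/(real k+1)) has_vector_derivative x^k) (at x within {0..1})"
      by (simp add: has_real_derivative_iff_has_vector_derivative[symmetric] has_field_derivative_at_within)
  qed (auto intro!: continuous_intros)
  then show "(\<integral>x. indicator {0..1} x * x^k \<partial>lborel) = 1 / (real k + 1)" by simp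
qed

lemma a_abs:
  fixes e :: real assumes e: "e > -1"
  shows "\<bar>(e gchoose n) * ((e+1) * Beta (e+1) (n+1))\<bar> = \<bar>pochhammer (-e) n / pochhammer (2+e) n\<bar>"
proof -
  have "(e gchoose n) * ((e+1) * Beta (e+1) (n+1)) = (-1)^n * pochhammer (-e) n / pochhammer (2+e) n"
    unfolding fact_over_poch[OF e, symmetric] gbinomial_pochhammer by simp
  then show ?thesis by (simp add: abs_mult)
qed

lemma outer_series:
  fixes e :: real assumes e: "e > -1"
  defines "a \<equiv> \<lambda>n. (e gchoose n) * ((e+1) * Beta (e+1) (n+1))"
  shows "summable (\<lambda>n. a n / (2*real n+1))"
    and "integrable lborel (\<lambda>x. indicator {0..1} x * (\<Sum>n. a n * x^(2*n)))"
    and "(\<Sum>n. a n / (2*real n+1)) = (\<integral>x. indicator {0..1} x * (\<Sum>n. a n * x^(2*n)) \<partial>lborel)"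
proof -
  have Tabs: "summable (\<lambda>n. \<bar>a n / (2*real n+1)\<bar>)"
  proof -
    have "\<bar>a n / (2*real n+1)\<bar> = \<bar>pochhammer (-e) n / pochhammer (2+e) n / (2*real n+1)\<bar>" for n
      unfolding a_def abs_divide a_abs[OF e] by simp
    then show ?thesis using T_abs_summable[OF e] by simp
  qed
  then show "summable (\<lambda>n. a n / (2*real n+1))" by (rule summable_rabs_cancel)
  define f where "f n x = a n * (indicator {0..1} x * x^(2*n))" for n x
  have int: "integrable lborel (f n)" for n unfolding f_def by (intro integrable_mult_right int_pow01)
  have intf: "integral\<^sup>L lborel (f n) = a n / (2*real n+1)" for n
    unfolding f_def integral_mult_right_zero int_pow01 by simp
  have sn: "summable (\<lambda>n. \<integral>x. norm (f n x) \<partial>lborel)"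
  proof -
    have "(\<integral>x. norm (f n x) \<partial>lborel) = \<bar>a n / (2*real n+1)\<bar>" for n
    proof -
      have "(\<lambda>x. norm (f n x)) = (\<lambda>x. \<bar>a n\<bar> * (indicator {0..1} x * x^(2*n)))"
        unfolding f_def by (auto simp: indicator_def abs_mult)
      then show ?thesis by (simp add: int_pow01 abs_divide)
    qed
    then show ?thesis using Tabs by simp
  qed
  have AEs: "AE x in lborel. summable (\<lambda>n. norm (f n x))"
    using AE_lborel_singleton[of 1]
  proof eventually_elim
    case (elim x)
    show ?case
    proof (cases "0 \<le> x \<and> x \<le> 1")
      case False then show ?thesis unfolding f_def by simp
    next
      case True
      then have x2: "0 \<le> x^2" "x^2 < 1" using elim by (auto simp: power_less_one_iff)
      have lim: "(\<lambda>n. 2 * (of_nat n * (x^2)^n) + (x^2)^n) \<longlonglongrightarrow> 2 * 0 + 0"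
        using x2 by (intro tendsto_intros powser_times_n_limit_0 LIMSEQ_power_zero) auto
      then have "eventually (\<lambda>n. 2 * (of_nat n * (x^2)^n) + (x^2)^n < 1) sequentially"
        by (intro order_tendstoD(2)[OF lim]) simp
      then have "eventually (\<lambda>n. norm (norm (f n x)) \<le> \<bar>a n / (2*real n+1)\<bar>) sequentially"
      proof eventually_elim
        case (elim n)
        have d: "2*real n+1 > 0" by simp
        have "norm (norm (f n x)) = \<bar>a n / (2*real n+1)\<bar> * ((2*real n+1) * (x^2)^n)"
          unfolding f_def using True d by (simp add: abs_mult power_mult abs_divide)
        also have "\<dots> \<le> \<bar>a n / (2*real n+1)\<bar> * 1"
          using elim by (intro mult_left_mono) (auto simp: algebra_simps)
        finally show ?case by simp
      qed
      from summable_comparison_test_ev[OF this Tabs] show ?thesis .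
    qed
  qed
  have eq: "(\<Sum>n. f n x) = indicator {0..1} x * (\<Sum>n. a n * x^(2*n))" for x
    unfolding f_def by (cases "x \<in> {0..1}") auto
  show "integrable lborel (\<lambda>x. indicator {0..1} x * (\<Sum>n. a n * x^(2*n)))"
    using integrable_suminf[OF int AEs sn] unfolding eq .
  show "(\<Sum>n. a n / (2*real n+1)) = (\<integral>x. indicator {0..1} x * (\<Sum>n. a n * x^(2*n)) \<partial>lborel)"
    using integral_suminf[OF int AEs sn] unfolding eq intf by simp
qed



lemma subst1:
  fixes e x :: real assumes e: "e > -1" and x: "0 \<le> x" "x < 1"
  shows "(\<integral>\<^sup>+w. ennreal (indicator {0..1} w * (w powr e * (1+(1-w)*x^2) powr e)) \<partial>lborel) =
         (\<integral>\<^sup>+t. ennreal (indicator {0..1} t * (t powr e / sqrt ((1+x^2)^2 - 4*x^2*t))) \<partial>lborel)"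
proof -
  define g where "g w = w*(1+(1-w)*x^2)" for w :: real
  define g' where "g' w = 1+x^2-2*w*x^2" for w :: real
  define f where "f t = t powr e / sqrt ((1+x^2)^2 - 4*x^2*t)" for t :: real
  have x2: "x^2 < 1" "0 \<le> x^2" using x by (auto simp: power_less_one_iff)
  have g01: "g 0 = 0" "g 1 = 1" unfolding g_def by simp_all
  have "(\<integral>\<^sup>+t. ennreal (f t * indicator {g 0..g 1} t) \<partial>lborel) =
        (\<integral>\<^sup>+w. ennreal (f (g w) * g' w * indicator {0..1} w) \<partial>lborel)"
  proof (rule nn_integral_substitution)
    show "set_borel_measurable borel {g 0..g 1} f" unfolding f_def set_borel_measurable_def by measurable
    show "(g has_real_derivative g' w) (at w)" if "w \<in> {0..1}" for w
      unfolding g_def g'_def by (auto intro!: derivative_eq_intros simp: algebra_simps)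
    show "continuous_on {0..1} g'" unfolding g'_def by (intro continuous_intros)
    show "0 \<le> g' w" if "w \<in> {0..1}" for w
    proof -
      have "w*x^2 \<le> 1*x^2" using that x2 by (intro mult_right_mono) auto
      then show ?thesis unfolding g'_def using x2 by simp
    qed
  qed simp
  also have "\<dots> = (\<integral>\<^sup>+w. ennreal (indicator {0..1} w * (w powr e * (1+(1-w)*x^2) powr e)) \<partial>lborel)"
  proof (rule nn_integral_cong)
    fix w :: real
    show "ennreal (f (g w) * g' w * indicator {0..1} w) = ennreal (indicator {0..1} w * (w powr e * (1+(1-w)*x^2) powr e))"
    proof (cases "w \<in> {0..1}")
      case False then show ?thesis by simp
    next
      case True
      have "w*x^2 \<le> 1*x^2" using True x2 by (intro mult_right_mono) auto
      then have gp: "g' w > 0" unfolding g'_def using x2 by simp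
      have "(1+x^2)^2 - 4*x^2*g w = (g' w)^2" unfolding g_def g'_def by (simp add: algebra_simps power2_eq_square)
      then have sq: "sqrt ((1+x^2)^2 - 4*x^2*g w) = g' w" using gp by simp
      have nn: "0 \<le> 1+(1-w)*x^2" using True x2 by (intro add_nonneg_nonneg mult_nonneg_nonneg) auto
      have "f (g w) * g' w = g w powr e" unfolding f_def sq using gp by simp
      also have "\<dots> = w powr e * (1+(1-w)*x^2) powr e" unfolding g_def using True nn by (simp add: powr_mult)
      finally show ?thesis using True by simp
    qed
  qed
  finally show ?thesis unfolding g01 f_def by (simp add: mult.commute)
qed



definition kf :: "real \<Rightarrow> real \<Rightarrow> real" where
  "kf t y = 1/4 * (y powr (-1/2) * (1-y) powr (-1/2) * (1-t*y) powr (-1/2))"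

lemma g_deriv: "((\<lambda>x::real. 4*x^2/(1+x^2)^2) has_real_derivative (8*x*(1-x^2)/(1+x^2)^3)) (at x)"
proof -
  have p: "1+x^2 \<noteq> 0" by (smt (verit) zero_le_power2)
  have "((\<lambda>x::real. 4*x^2/(1+x^2)^2) has_real_derivative
     ((4*(2*x))*(1+x^2)^2 - 4*x^2*(2*(1+x^2)*(2*x)))/((1+x^2)^2*(1+x^2)^2)) (at x)"
    using p by (auto intro!: derivative_eq_intros simp: power2_eq_square)
  moreover have "((4*(2*x))*(1+x^2)^2 - 4*x^2*(2*(1+x^2)*(2*x)))/((1+x^2)^2*(1+x^2)^2) = 8*x*(1-x^2)/(1+x^2)^3"
  proof -
    have gen: "((4*(2*x))*q^2 - 4*x^2*(2*q*(2*x)))/(q^2*q^2) = 8*x*(q-2*x^2)/q^3" if "q \<noteq> 0" for q :: real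
      using that by (simp add: field_simps power2_eq_square power3_eq_cube)
    show ?thesis using gen[OF p] by simp
  qed
  ultimately show ?thesis by simp
qed

lemma sq_powr: "(c::real) > 0 \<Longrightarrow> (c^2) powr (-1/2) = 1/c"
proof -
  assume c: "c > 0"
  have "(c^2) powr (-1/2) = (c^2) powr (-(1/2))" by simp
  also have "\<dots> = inverse ((c^2) powr (1/2))" by (rule powr_minus)
  also have "\<dots> = inverse (sqrt (c^2))" by (simp add: powr_half_sqrt)
  also have "\<dots> = 1/c" using c by (simp add: divide_inverse)
  finally show ?thesis .
qed

lemma kf_pointwise:
  fixes t x :: real assumes t: "0 \<le> t" "t < 1" and x: "0 < x" "x < 1"
  shows "kf t (4*x^2/(1+x^2)^2) * (8*x*(1-x^2)/(1+x^2)^3) = 1 / sqrt ((1+x^2)^2 - 4*x^2*t)"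
proof -
  have x2: "0 < x^2" "x^2 < 1" using x by (auto simp: power_less_one_iff)
  define q where "q = 1 + x^2"
  have q: "q > 0" unfolding q_def by (smt (verit) zero_le_power2)
  define D where "D = q^2 - 4*x^2*t"
  have "x^2*t \<le> x^2*1" using x2 t by (intro mult_left_mono) auto
  then have "D \<ge> (1-x^2)^2" unfolding D_def q_def by (simp add: algebra_simps power2_eq_square)
  moreover have "(1-x^2)^2 > 0" using x2 by simp
  ultimately have Dp: "D > 0" by linarith
  have sD: "sqrt D > 0" using Dp by simp
  have e1: "4*x^2/q^2 = (2*x/q)^2" by (simp add: power2_eq_square field_simps)
  have e2: "1 - 4*x^2/q^2 = ((1-x^2)/q)^2"
  proof -
    have "1 - 4*x^2/q^2 = (q^2 - 4*x^2)/q^2" using q by (simp add: field_simps)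
    also have "q^2 - 4*x^2 = (1-x^2)^2" unfolding q_def by (simp add: algebra_simps power2_eq_square)
    finally show ?thesis by (simp add: power_divide)
  qed
  have e3: "1 - t * (4*x^2/q^2) = (sqrt D/q)^2"
  proof -
    have "1 - t * (4*x^2/q^2) = D/q^2" unfolding D_def using q by (simp add: field_simps)
    then show ?thesis using Dp by (simp add: power_divide)
  qed
  have "kf t (4*x^2/q^2) = 1/4 * (q/(2*x) * (q/(1-x^2)) * (q / sqrt D))"
  proof -
    have c1: "2*x/q > 0" "(1-x^2)/q > 0" "sqrt D/q > 0" using q x x2 sD by auto
    have p1: "(4*x^2/q^2) powr (-1/2) = q/(2*x)" unfolding e1 sq_powr[OF c1(1)] by simp
    have p2: "(1 - 4*x^2/q^2) powr (-1/2) = q/(1-x^2)" unfolding e2 sq_powr[OF c1(2)] by simp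
    have p3: "(1 - t * (4*x^2/q^2)) powr (-1/2) = q/sqrt D" unfolding e3 sq_powr[OF c1(3)] by simp
    show ?thesis unfolding kf_def p1 p2 p3 ..
  qed
  also have "\<dots> * (8*x*(1-x^2)/q^3) = 1 / sqrt D"
    using q x x2 sD by (simp add: field_simps power3_eq_cube)
  finally show ?thesis unfolding q_def D_def .
qed

lemma subst2:
  fixes t :: real assumes t: "0 \<le> t" "t < 1"
  shows "(\<integral>\<^sup>+x. ennreal (indicator {0..1} x * (1 / sqrt ((1+x^2)^2 - 4*x^2*t))) \<partial>lborel) =
         (\<integral>\<^sup>+y. ennreal (indicator {0..1} y * kf t y) \<partial>lborel)"
proof -
  define g where "g x = 4*x^2/(1+x^2)^2" for x :: real
  define g' where "g' x = 8*x*(1-x^2)/(1+x^2)^3" for x :: real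
  have g01: "g 0 = 0" "g 1 = 1" unfolding g_def by simp_all
  have "(\<integral>\<^sup>+y. ennreal (kf t y * indicator {g 0..g 1} y) \<partial>lborel) =
        (\<integral>\<^sup>+x. ennreal (kf t (g x) * g' x * indicator {0..1} x) \<partial>lborel)"
  proof (rule nn_integral_substitution)
    show "set_borel_measurable borel {g 0..g 1} (kf t)" unfolding kf_def set_borel_measurable_def by measurable
    show "(g has_real_derivative g' x) (at x)" if "x \<in> {0..1}" for x
      unfolding g_def g'_def by (rule g_deriv)
    show "continuous_on {0..1} g'" unfolding g'_def
      by (intro continuous_intros) (smt (verit) zero_le_power2 power_not_zero)
    show "0 \<le> g' x" if "x \<in> {0..1}" for x
    proof -
      have "x^2 \<le> 1" using that by (auto simp: power_le_one)
      then show ?thesis unfolding g'_def using that by (auto intro!: divide_nonneg_pos mult_nonneg_nonneg)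
    qed
  qed simp
  also have "\<dots> = (\<integral>\<^sup>+x. ennreal (indicator {0..1} x * (1 / sqrt ((1+x^2)^2 - 4*x^2*t))) \<partial>lborel)"
  proof (rule nn_integral_cong_AE)
    show "AE x in lborel. ennreal (kf t (g x) * g' x * indicator {0..1} x) =
       ennreal (indicator {0..1} x * (1 / sqrt ((1+x^2)^2 - 4*x^2*t)))"
      using AE_lborel_singleton[of 0] AE_lborel_singleton[of 1]
    proof eventually_elim
      case (elim x)
      show ?case
      proof (cases "x \<in> {0..1}")
        case False then show ?thesis by simp
      next
        case True
        then have x: "0 < x" "x < 1" using elim by auto
        show ?thesis using kf_pointwise[OF t x] True unfolding g_def g'_def by simp
      qed
    qed
  qed
  finally show ?thesis unfolding g01 by (simp add: mult.commute)
qed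



lemma cc_nonneg: "cc m \<ge> 0" unfolding cc_def by (simp add: pochhammer_nonneg)

lemma Beta_cc: "Beta (real m + 1/2) (1/2) = pi * cc m"
proof -
  have ni: "(1/2::real) \<notin> \<int>\<^sub>\<le>\<^sub>0" by (auto elim!: nonpos_Ints_cases)
  have p: "pochhammer (1/2) m = Gamma (1/2 + real m) / Gamma (1/2)" by (rule pochhammer_Gamma[OF ni])
  have g: "Gamma (1/2::real) = sqrt pi" by (rule Gamma_one_half_real)
  have f: "Gamma (real m + 1/2 + 1/2) = fact m" using Gamma_fact[of m] by (simp add: add_ac)
  have "Beta (real m + 1/2) (1/2) = Gamma (real m + 1/2) * Gamma (1/2) / fact m"
    unfolding Beta_def f ..
  also have "Gamma (real m + 1/2) = pochhammer (1/2) m * sqrt pi" using p g by (simp add: add_ac)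
  finally show ?thesis unfolding cc_def g by simp
qed

lemma binom_half:
  fixes z :: real assumes "0 \<le> z" "z < 1"
  shows "(\<lambda>m. cc m * z^m) sums (1 - z) powr (-1/2)"
proof -
  have "(\<lambda>n. ((-1/2) gchoose n) * (-z)^n) sums (1 + -z) powr (-1/2)"
    by (rule gen_binomial_real) (use assms in auto)
  moreover have "((-1/2) gchoose n) * (-z)^n = cc m * z^m" if "n = m" for n m
  proof -
    have "((-1/2::real) gchoose n) = (-1)^n * pochhammer (1/2) n / fact n"
      unfolding gbinomial_pochhammer by simp
    moreover have "(-z)^n = (-1)^n * z^n" by (rule power_minus)
    moreover have "((-1::real)^n * (-1)^n) = 1" by (simp add: power_mult_distrib[symmetric])
    ultimately show ?thesis unfolding that cc_def
      by (metis (no_types, lifting) mult.assoc mult.commute mult.left_neutral times_divide_eq_left)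
  qed
  ultimately show ?thesis by simp
qed


lemma beta_nn:
  fixes a b :: real assumes "a > 0" "b > 0"
  shows "(\<integral>\<^sup>+t. ennreal (indicator {0..1} t * (t powr (a-1) * (1-t) powr (b-1))) \<partial>lborel) = ennreal (Beta a b)"
  by (rule nn_integral_has_integral_lebesgue[OF _ has_integral_Beta_real[OF assms]]) auto

lemma kf_series:
  fixes t :: real assumes t: "0 \<le> t" "t < 1"
  shows "(\<integral>\<^sup>+y. ennreal (indicator {0..1} y * kf t y) \<partial>lborel) = (\<Sum>m. ennreal (pi/4 * cc m ^ 2 * t^m))"
proof -
  define h where "h m y = indicator {0..1} y * (1/4 * cc m * t^m) * (y powr (real m + 1/2 - 1) * (1-y) powr (1/2 - 1))" for m y
  have hnn: "h m y \<ge> 0" for m y unfolding h_def using t cc_nonneg[of m]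
    by (auto intro!: mult_nonneg_nonneg simp: indicator_def)
  have AE: "AE y in lborel. ennreal (indicator {0..1} y * kf t y) = (\<Sum>m. ennreal (h m y))"
    using AE_lborel_singleton[of 0] AE_lborel_singleton[of 1]
  proof eventually_elim
    case (elim y)
    show ?case
    proof (cases "y \<in> {0..1}")
      case False then show ?thesis unfolding h_def by simp
    next
      case True
      then have y: "0 < y" "y < 1" using elim by auto
      have ty: "0 \<le> t*y" "t*y < 1" using t y
        by (auto intro: mult_nonneg_nonneg) (smt (verit) mult_less_cancel_right1 mult_nonneg_nonneg)
      have s: "(\<lambda>m. cc m * (t*y)^m) sums (1 - t*y) powr (-1/2)" by (rule binom_half[OF ty])
      have S: "(\<lambda>m. (1/4 * (y powr (-1/2) * (1-y) powr (-1/2))) * (cc m * (t*y)^m)) sums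
            ((1/4 * (y powr (-1/2) * (1-y) powr (-1/2))) * (1 - t*y) powr (-1/2))"
        by (rule sums_mult[OF s])
      have hm: "h m y = (1/4 * (y powr (-1/2) * (1-y) powr (-1/2))) * (cc m * (t*y)^m)" for m
      proof -
        have "y powr (real m + 1/2 - 1) = y^m * y powr (-1/2)"
          using y by (simp add: powr_add[symmetric] powr_realpow[symmetric])
        then show ?thesis unfolding h_def using True by (simp add: power_mult_distrib mult_ac)
      qed
      have hf: "(\<lambda>m. h m y) = (\<lambda>m. (1/4 * (y powr (-1/2) * (1-y) powr (-1/2))) * (cc m * (t*y)^m))"
        by (intro ext hm)
      have V: "(1/4 * (y powr (-1/2) * (1-y) powr (-1/2))) * (1 - t*y) powr (-1/2) = indicator {0..1} y * kf t y"
        using True by (simp add: kf_def mult_ac)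
      from S have "(\<lambda>m. h m y) sums (indicator {0..1} y * kf t y)" unfolding hf V .
      then show ?thesis by (rule suminf_ennreal_eq[symmetric, OF hnn])
    qed
  qed
  have "(\<integral>\<^sup>+y. ennreal (indicator {0..1} y * kf t y) \<partial>lborel) = (\<integral>\<^sup>+y. (\<Sum>m. ennreal (h m y)) \<partial>lborel)"
    by (rule nn_integral_cong_AE[OF AE])
  also have "\<dots> = (\<Sum>m. \<integral>\<^sup>+y. ennreal (h m y) \<partial>lborel)"
    by (rule nn_integral_suminf) (simp add: h_def)
  also have "\<dots> = (\<Sum>m. ennreal (pi/4 * cc m ^ 2 * t^m))"
  proof (rule suminf_cong)
    fix m
    have c: "0 \<le> 1/4 * cc m * t^m" using t cc_nonneg[of m] by simp
    have "(\<integral>\<^sup>+y. ennreal (h m y) \<partial>lborel) =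
        (\<integral>\<^sup>+y. ennreal (1/4 * cc m * t^m) * ennreal (indicator {0..1} y * (y powr (real m + 1/2 - 1) * (1-y) powr (1/2 - 1))) \<partial>lborel)"
      unfolding h_def using c by (intro nn_integral_cong) (simp add: ennreal_mult'[symmetric] mult_ac)
    also have "\<dots> = ennreal (1/4 * cc m * t^m) * ennreal (Beta (real m + 1/2) (1/2))"
      by (subst nn_integral_cmult) (use beta_nn[of "real m + 1/2" "1/2"] in simp_all)
    also have "\<dots> = ennreal (pi/4 * cc m ^ 2 * t^m)"
      unfolding Beta_cc ennreal_mult'[OF c, symmetric] by (simp add: power2_eq_square mult_ac)
    finally show "(\<integral>\<^sup>+y. ennreal (h m y) \<partial>lborel) = ennreal (pi/4 * cc m ^ 2 * t^m)" .
  qed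
  finally show ?thesis .
qed




lemma Beta_a1: "a > 0 \<Longrightarrow> Beta a 1 = 1/(a::real)"
proof -
  assume a: "a > 0"
  have ni: "a \<notin> \<int>\<^sub>\<le>\<^sub>0" using a by (auto elim!: nonpos_Ints_cases)
  have "Gamma (a+1) = a * Gamma a" by (rule Gamma_plus1[OF ni])
  moreover have "Gamma a > 0" using a by simp
  ultimately show ?thesis unfolding Beta_def by simp
qed

lemma pow_int_nn:
  fixes e :: real assumes e: "e > -1"
  shows "(\<integral>\<^sup>+t. ennreal (indicator {0..1} t * (t powr e * t^m)) \<partial>lborel) = ennreal (1/(e+m+1))"
proof -
  have "(\<integral>\<^sup>+t. ennreal (indicator {0..1} t * (t powr e * t^m)) \<partial>lborel) =
      (\<integral>\<^sup>+t. ennreal (indicator {0..1} t * (t powr ((e+m+1)-1) * (1-t) powr (1-1))) \<partial>lborel)"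
  proof (rule nn_integral_cong_AE)
    show "AE t in lborel. ennreal (indicator {0..1} t * (t powr e * t^m)) =
        ennreal (indicator {0..1} t * (t powr ((e+m+1)-1) * (1-t) powr (1-1)))"
      using AE_lborel_singleton[of 0] AE_lborel_singleton[of 1]
    proof eventually_elim
      case (elim t)
      show ?case
      proof (cases "t \<in> {0..1}")
        case False then show ?thesis by simp
      next
        case True
        then have "0 < t" "t < 1" using elim by auto
        then show ?thesis by (simp add: powr_add powr_realpow)
      qed
    qed
  qed
  also have "\<dots> = ennreal (Beta (e+m+1) 1)" by (rule beta_nn) (use e in auto)
  also have "\<dots> = ennreal (1/(e+m+1))" using e by (subst Beta_a1) auto
  finally show ?thesis .
qed


lemma t_side:
  fixes e :: real assumes e: "e > -1"
  shows "(\<integral>\<^sup>+t. ennreal (indicator {0..1} t * t powr e) *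
            (\<integral>\<^sup>+x. ennreal (indicator {0..1} x * (1 / sqrt ((1+x^2)^2 - 4*x^2*t))) \<partial>lborel) \<partial>lborel)
         = (\<Sum>m. ennreal (pi/4 * cc m ^ 2 * (1/(e+m+1))))"
proof -
  have "(\<integral>\<^sup>+t. ennreal (indicator {0..1} t * t powr e) *
            (\<integral>\<^sup>+x. ennreal (indicator {0..1} x * (1 / sqrt ((1+x^2)^2 - 4*x^2*t))) \<partial>lborel) \<partial>lborel)
      = (\<integral>\<^sup>+t. (\<Sum>m. ennreal (pi/4 * cc m ^ 2) * ennreal (indicator {0..1} t * (t powr e * t^m))) \<partial>lborel)"
  proof (rule nn_integral_cong_AE)
    show "AE t in lborel. ennreal (indicator {0..1} t * t powr e) *
            (\<integral>\<^sup>+x. ennreal (indicator {0..1} x * (1 / sqrt ((1+x^2)^2 - 4*x^2*t))) \<partial>lborel)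
         = (\<Sum>m. ennreal (pi/4 * cc m ^ 2) * ennreal (indicator {0..1} t * (t powr e * t^m)))"
      using AE_lborel_singleton[of 1]
    proof eventually_elim
      case (elim t)
      show ?case
      proof (cases "t \<in> {0..1}")
        case False then show ?thesis by simp
      next
        case True
        then have t: "0 \<le> t" "t < 1" using elim by auto
        have "ennreal (indicator {0..1} t * t powr e) *
            (\<integral>\<^sup>+x. ennreal (indicator {0..1} x * (1 / sqrt ((1+x^2)^2 - 4*x^2*t))) \<partial>lborel)
          = ennreal (t powr e) * (\<Sum>m. ennreal (pi/4 * cc m ^ 2 * t^m))"
          unfolding subst2[OF t] kf_series[OF t] using True by simp
        also have "\<dots> = (\<Sum>m. ennreal (t powr e) * ennreal (pi/4 * cc m ^ 2 * t^m))"
          by (rule ennreal_suminf_cmult[symmetric])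
        also have "\<dots> = (\<Sum>m. ennreal (pi/4 * cc m ^ 2) * ennreal (indicator {0..1} t * (t powr e * t^m)))"
        proof (rule suminf_cong)
          fix m
          have "0 \<le> pi/4 * cc m ^ 2" by simp
          moreover have "0 \<le> t powr e" by simp
          ultimately show "ennreal (t powr e) * ennreal (pi/4 * cc m ^ 2 * t^m) =
              ennreal (pi/4 * cc m ^ 2) * ennreal (indicator {0..1} t * (t powr e * t^m))"
            using True t by (simp add: ennreal_mult'[symmetric] mult_ac)
        qed
        finally show ?thesis .
      qed
    qed
  qed
  also have "\<dots> = (\<Sum>m. \<integral>\<^sup>+t. ennreal (pi/4 * cc m ^ 2) * ennreal (indicator {0..1} t * (t powr e * t^m)) \<partial>lborel)"
    by (rule nn_integral_suminf) simp
  also have "\<dots> = (\<Sum>m. ennreal (pi/4 * cc m ^ 2 * (1/(e+m+1))))"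
  proof (rule suminf_cong)
    fix m
    have "0 \<le> pi/4 * cc m ^ 2" by simp
    then show "(\<integral>\<^sup>+t. ennreal (pi/4 * cc m ^ 2) * ennreal (indicator {0..1} t * (t powr e * t^m)) \<partial>lborel)
        = ennreal (pi/4 * cc m ^ 2 * (1/(e+m+1)))"
    proof (subst nn_integral_cmult)
      show "(\<lambda>t. ennreal (indicator {0..1} t * (t powr e * t^m))) \<in> borel_measurable lborel" by measurable
    qed (simp only: pow_int_nn[OF e] ennreal_mult'[OF \<open>0 \<le> pi/4 * cc m ^ 2\<close>, symmetric])
  qed
  finally show ?thesis .
qed


lemma x_side:
  fixes e :: real assumes e: "e > -1"
  shows "(\<integral>\<^sup>+x. ennreal (indicator {0..1} x) *
            (\<integral>\<^sup>+w. ennreal (indicator {0..1} w * (w powr e * (1+(1-w)*x^2) powr e)) \<partial>lborel) \<partial>lborel)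
       = (\<integral>\<^sup>+t. ennreal (indicator {0..1} t * t powr e) *
            (\<integral>\<^sup>+x. ennreal (indicator {0..1} x * (1 / sqrt ((1+x^2)^2 - 4*x^2*t))) \<partial>lborel) \<partial>lborel)"
proof -
  define F where "F x t = ennreal (indicator {0..1} x * (indicator {0..1} t * (t powr e / sqrt ((1+x^2)^2 - 4*x^2*t))))"
    for x t :: real
  have "(\<integral>\<^sup>+x. ennreal (indicator {0..1} x) *
            (\<integral>\<^sup>+w. ennreal (indicator {0..1} w * (w powr e * (1+(1-w)*x^2) powr e)) \<partial>lborel) \<partial>lborel)
      = (\<integral>\<^sup>+x. \<integral>\<^sup>+t. F x t \<partial>lborel \<partial>lborel)"
  proof (rule nn_integral_cong_AE)
    show "AE x in lborel. ennreal (indicator {0..1} x) *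
            (\<integral>\<^sup>+w. ennreal (indicator {0..1} w * (w powr e * (1+(1-w)*x^2) powr e)) \<partial>lborel)
          = (\<integral>\<^sup>+t. F x t \<partial>lborel)"
      using AE_lborel_singleton[of 1]
    proof eventually_elim
      case (elim x)
      show ?case
      proof (cases "x \<in> {0..1}")
        case False then show ?thesis unfolding F_def by simp
      next
        case True
        then have x: "0 \<le> x" "x < 1" using elim by auto
        show ?thesis unfolding subst1[OF e x] F_def using True by simp
      qed
    qed
  qed
  also have "\<dots> = (\<integral>\<^sup>+t. \<integral>\<^sup>+x. F x t \<partial>lborel \<partial>lborel)"
    by (rule lborel_pair.Fubini'[symmetric]) (unfold F_def, measurable)
  also have "\<dots> = (\<integral>\<^sup>+t. ennreal (indicator {0..1} t * t powr e) *
            (\<integral>\<^sup>+x. ennreal (indicator {0..1} x * (1 / sqrt ((1+x^2)^2 - 4*x^2*t))) \<partial>lborel) \<partial>lborel)"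
  proof (rule nn_integral_cong)
    fix t :: real
    have c: "0 \<le> indicator {0..1} t * t powr e" by simp
    have "(\<integral>\<^sup>+x. F x t \<partial>lborel) = (\<integral>\<^sup>+x. ennreal (indicator {0..1} t * t powr e) *
        ennreal (indicator {0..1} x * (1 / sqrt ((1+x^2)^2 - 4*x^2*t))) \<partial>lborel)"
      unfolding F_def ennreal_mult'[OF c, symmetric] by (intro nn_integral_cong) (simp add: mult_ac)
    also have "\<dots> = ennreal (indicator {0..1} t * t powr e) *
        (\<integral>\<^sup>+x. ennreal (indicator {0..1} x * (1 / sqrt ((1+x^2)^2 - 4*x^2*t))) \<partial>lborel)"
      by (rule nn_integral_cmult) measurable
    finally show "(\<integral>\<^sup>+x. F x t \<partial>lborel) = ennreal (indicator {0..1} t * t powr e) *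
        (\<integral>\<^sup>+x. ennreal (indicator {0..1} x * (1 / sqrt ((1+x^2)^2 - 4*x^2*t))) \<partial>lborel)" .
  qed
  finally show ?thesis .
qed


theorem mainTheorem2:
  fixes \<eta> :: real
  assumes "\<eta> > -1"
  shows "pi / 4 =
    hypergeom [-\<eta>, 1/2, 1] [3/2, 2 + \<eta>] (-1) /
    hypergeom [1/2, 1/2, 1 + \<eta>] [1, 2 + \<eta>] 1"
proof -
  define e where "e = \<eta>"
  have e: "e > -1" using assms unfolding e_def by simp
  define a where "a n = (e gchoose n) * ((e+1) * Beta (e+1) (n+1))" for n :: nat
  define G where "G x = (\<Sum>n. a n * x^(2*n))" for x :: real
  define S where "S = (\<Sum>n. a n / (2*real n+1))"
  define I where "I x = (\<integral>w. indicator {0..1} w * (w powr e * (1+(1-w)*x^2) powr e) \<partial>lborel)" for x :: real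
  have A: "hypergeom [-e, 1/2, 1] [3/2, 2 + e] (-1) = S" unfolding S_def a_def by (rule A_series[OF e])
  have B: "hypergeom [1/2, 1/2, 1 + e] [1, 2 + e] 1 = (\<Sum>m. cc m ^ 2 * ((1+e)/(1+e+m)))" by (rule B_series[OF e])
  note os = outer_series[OF e]
  have intG: "integrable lborel (\<lambda>x. indicator {0..1} x * G x)" using os(2) unfolding G_def a_def .
  have SG: "S = (\<integral>x. indicator {0..1} x * G x \<partial>lborel)" using os(3) unfolding S_def G_def a_def .
  have Gx: "G x = (e+1) * I x" and intI: "integrable lborel (\<lambda>w. indicator {0..1} w * (w powr e * (1+(1-w)*x^2) powr e))"
    if "0 \<le> x" "x < 1" for x
    using inner_series[OF e that] unfolding G_def I_def a_def by auto
  have Inn: "ennreal (I x) = (\<integral>\<^sup>+w. ennreal (indicator {0..1} w * (w powr e * (1+(1-w)*x^2) powr e)) \<partial>lborel)"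
    if "0 \<le> x" "x < 1" for x
    unfolding I_def by (rule nn_integral_eq_integral[symmetric, OF intI[OF that]]) auto
  have I0: "I x \<ge> 0" for x unfolding I_def by (intro integral_nonneg_AE AE_I2) auto
  have AEG: "AE x in lborel. 0 \<le> indicator {0..1} x * G x"
    using AE_lborel_singleton[of 1]
  proof eventually_elim
    case (elim x)
    show ?case
    proof (cases "x \<in> {0..1}")
      case True
      then have "0 \<le> x" "x < 1" using elim by auto
      then show ?thesis using Gx I0 e by simp
    qed simp
  qed
  have S0: "S \<ge> 0" unfolding SG by (rule integral_nonneg_AE[OF AEG])
  have "ennreal S = (\<integral>\<^sup>+x. ennreal (indicator {0..1} x * G x) \<partial>lborel)"
    unfolding SG by (rule nn_integral_eq_integral[symmetric, OF intG AEG])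
  also have "\<dots> = (\<integral>\<^sup>+x. ennreal (e+1) * (ennreal (indicator {0..1} x) *
            (\<integral>\<^sup>+w. ennreal (indicator {0..1} w * (w powr e * (1+(1-w)*x^2) powr e)) \<partial>lborel)) \<partial>lborel)"
  proof (rule nn_integral_cong_AE)
    show "AE x in lborel. ennreal (indicator {0..1} x * G x) = ennreal (e+1) * (ennreal (indicator {0..1} x) *
            (\<integral>\<^sup>+w. ennreal (indicator {0..1} w * (w powr e * (1+(1-w)*x^2) powr e)) \<partial>lborel))"
      using AE_lborel_singleton[of 1]
    proof eventually_elim
      case (elim x)
      show ?case
      proof (cases "x \<in> {0..1}")
        case True
        then have x: "0 \<le> x" "x < 1" using elim by auto
        have "ennreal (indicator {0..1} x * G x) = ennreal (e+1) * ennreal (I x)"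
          using True Gx[OF x] e I0[of x] by (simp add: ennreal_mult[symmetric])
        then show ?thesis unfolding Inn[OF x] using True by simp
      qed simp
    qed
  qed
  also have "\<dots> = ennreal (e+1) * (\<integral>\<^sup>+x. ennreal (indicator {0..1} x) *
            (\<integral>\<^sup>+w. ennreal (indicator {0..1} w * (w powr e * (1+(1-w)*x^2) powr e)) \<partial>lborel) \<partial>lborel)"
    by (rule nn_integral_cmult) measurable
  also have "\<dots> = ennreal (e+1) * (\<Sum>m. ennreal (pi/4 * cc m ^ 2 * (1/(e+m+1))))"
    unfolding x_side[OF e] t_side[OF e] ..
  also have "\<dots> = (\<Sum>m. ennreal (pi/4 * (cc m ^ 2 * ((1+e)/(1+e+m)))))"
  proof -
    have "ennreal (e+1) * ennreal (pi/4 * cc m ^ 2 * (1/(e+m+1))) = ennreal (pi/4 * (cc m ^ 2 * ((1+e)/(1+e+m))))" for m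
      using e by (simp add: ennreal_mult'[symmetric] field_simps add_ac)
    then show ?thesis by (simp add: ennreal_suminf_cmult[symmetric])
  qed
  finally have eqS: "(\<Sum>m. ennreal (pi/4 * (cc m ^ 2 * ((1+e)/(1+e+m))))) = ennreal S" by simp
  define b where "b m = cc m ^ 2 * ((1+e)/(1+e+m))" for m :: nat
  have b0: "b m \<ge> 0" for m unfolding b_def using e by simp
  have f0: "pi/4 * b m \<ge> 0" for m using b0[of m] by simp
  have sf: "summable (\<lambda>m. pi/4 * b m)"
    by (rule summable_suminf_not_top[OF f0]) (use eqS in \<open>simp add: b_def\<close>)
  have sb: "summable b" using summable_mult[OF sf, of "4/pi"] by simp
  have "ennreal (\<Sum>m. pi/4 * b m) = ennreal S"
    using eqS suminf_ennreal2[OF f0 sf] by (simp add: b_def)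
  moreover have X0: "0 \<le> (\<Sum>m. pi/4 * b m)" by (rule suminf_nonneg[OF sf f0])
  ultimately have "(\<Sum>m. pi/4 * b m) = S" using ennreal_inj[OF X0 S0] by blast
  then have SB: "S = pi/4 * (\<Sum>m. b m)" using suminf_mult[OF sb, of "pi/4"] by simp
  have "b 0 > 0" unfolding b_def cc_def using e by simp
  then have Bpos: "(\<Sum>m. b m) > 0" using suminf_pos_iff[OF sb b0] by blast
  have "pi / 4 = S / (\<Sum>m. b m)" using SB Bpos by simp
  then show ?thesis using A B unfolding e_def b_def by simp
qed


end
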